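(* Let $(X,d)$ and $(\Lambda,\rho)$ be compact metric spaces and $\omega:\Lambda\times X\to X$ continuous. Let $\nu$ be a $\beta$-invariant Borel probability measure on $\Omega$ with $\nu(F)=1$, and let $\nu^{\Phi}$ be the (unique) $\Phi$-invariant Borel probability measure on $\Omega\times X$ with $\pi_*(\nu^{\Phi})=\nu$. If $\nu$ is ergodic for $\beta$, then $\nu^{\Phi}$ is ergodic for $\Phi$.
   Context: $\omega_\lambda(x)=\omega(\lambda,x)$. $\Omega=\Lambda^{\mathbb{N}}$ with the product topology; $\beta:\Omega\to\Omega$ is the shift $\beta(\sigma_1,\sigma_2,\dots)=(\sigma_2,\sigma_3,\dots)$. The skew product is $\Phi:\Omega\times X\to\Omega\times X$, $\Phi(\sigma,x)=(\beta(\sigma),\omega_{\sigma_1}(x))$, and $\pi:\Omega\times X\to\Omega$ is $\pi(\sigma,x)=\sigma$. $F=\{\sigma\in\Omega:\lim_{n\to\infty}\frac1n\sum_{i=1}^n\operatorname{Diam}(\omega_{\sigma_i}\circ\cdots\circ\omega_{\sigma_1}(X))=0\}$, with $\operatorname{Diam}(A)=\sup\{d(x,y):x,y\in A\}$. *)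

theory Defs
  imports "HOL-Probability.Probability"
begin

text \<open>Shift on \<Omega> = \<Lambda>^\<nat>; sequences are indexed from 0, so sigma 0 is sigma_1.\<close>
definition beta_shift :: "(nat \<Rightarrow> 'l) \<Rightarrow> (nat \<Rightarrow> 'l)" where
  "beta_shift \<sigma> = (\<lambda>n. \<sigma> (Suc n))"

definition skew :: "('l \<Rightarrow> 'x \<Rightarrow> 'x) \<Rightarrow> (nat \<Rightarrow> 'l) \<times> 'x \<Rightarrow> (nat \<Rightarrow> 'l) \<times> 'x" where
  "skew \<omega> p = (beta_shift (fst p), \<omega> (fst p 0) (snd p))"

fun comp_iter :: "('l \<Rightarrow> 'x \<Rightarrow> 'x) \<Rightarrow> (nat \<Rightarrow> 'l) \<Rightarrow> nat \<Rightarrow> 'x \<Rightarrow> 'x" where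
  "comp_iter \<omega> \<sigma> 0 = id"
| "comp_iter \<omega> \<sigma> (Suc n) = \<omega> (\<sigma> n) \<circ> comp_iter \<omega> \<sigma> n"

text \<open>The set F (X is the whole type 'x).\<close>
definition Fset :: "('l \<Rightarrow> 'x::metric_space \<Rightarrow> 'x) \<Rightarrow> (nat \<Rightarrow> 'l) set" where
  "Fset \<omega> = {\<sigma>. (\<lambda>n. (1 / real n) * (\<Sum>i=1..n. diameter (range (comp_iter \<omega> \<sigma> i)))) \<longlonglongrightarrow> 0}"

definition invariant_measure :: "'a measure \<Rightarrow> ('a \<Rightarrow> 'a) \<Rightarrow> bool" where
  "invariant_measure M T \<longleftrightarrow> T \<in> M \<rightarrow>\<^sub>M M \<and> distr M M T = M"

definition ergodic :: "'a measure \<Rightarrow> ('a \<Rightarrow> 'a) \<Rightarrow> bool" where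
  "ergodic M T \<longleftrightarrow> invariant_measure M T \<and>
     (\<forall>A\<in>sets M. T -` A \<inter> space M = A \<longrightarrow> emeasure M A = 0 \<or> emeasure M A = 1)"

end

theory Submission
  imports Defs
begin

lemma thick_small:
  fixes M :: "'a::metric_space measure"
  assumes fm: "finite_measure M" and sb: "sets M = sets borel" and C: "closed C" "C \<noteq> {}" and e: "e > 0"
  shows "\<exists>r>0. measure M ({p. infdist p C < r} - C) < e"
proof -
  interpret finite_measure M by fact
  define S where "S m = {p. infdist p C < 1 / real (Suc m)} - C" for m
  have meas: "S m \<in> sets M" for m
  proof -
    have "open {p. infdist p C < 1 / real (Suc m)}"
      by (intro open_Collect_less continuous_intros)
    then show ?thesis unfolding S_def sb using C by (intro sets.Diff) auto
  qed
  have dec: "decseq S"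
  proof (rule decseq_SucI)
    fix m show "S (Suc m) \<subseteq> S m" unfolding S_def
      by (auto simp: frac_le) (smt (verit) frac_le of_nat_0_less_iff of_nat_Suc zero_less_Suc)
  qed
  have emp: "(\<Inter>i. S i) = {}"
  proof (rule ccontr)
    assume "(\<Inter>i. S i) \<noteq> {}"
    then obtain p where p: "\<And>i. p \<in> S i" by auto
    then have "p \<notin> C" unfolding S_def by auto
    then have pos: "infdist p C > 0" using in_closed_iff_infdist_zero[OF C] infdist_nonneg[of p C]
      by auto
    obtain n where n: "1 / real (Suc n) < infdist p C"
      using reals_Archimedean[OF pos] by (metis inverse_eq_divide)
    then show False using p[of n] unfolding S_def by auto
  qed
  have "(\<lambda>n. measure M (S n)) \<longlonglongrightarrow> 0"
    using finite_Lim_measure_decseq[of S] meas dec emp by auto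
  then obtain m where "measure M (S m) < e"
    using e by (metis (no_types, lifting) LIMSEQ_le_const not_le order_refl measure_nonneg)
  then show ?thesis unfolding S_def by (intro exI[of _ "1 / real (Suc m)"]) auto
qed


lemma closed_regular:
  fixes M :: "'a::metric_space measure"
  assumes fm: "finite_measure M" and sb: "sets M = sets borel" and A: "A \<in> sets borel"
  shows "\<forall>e>0. \<exists>C U. closed C \<and> open U \<and> C \<subseteq> A \<and> A \<subseteq> U \<and> measure M (U - C) < e"
proof -
  interpret finite_measure M by fact
  have mopen: "U - C \<in> sets M" if "open U" "closed C" for U C
    using that unfolding sb by (intro sets.Diff) auto
  have Ain: "A \<in> sigma_sets UNIV (Collect closed)"
    using A by (simp add: borel_eq_closed)
  have ist: "Int_stable (Collect closed)" by (simp add: Int_stable_def closed_Int)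
  have pw: "Collect closed \<subseteq> Pow (UNIV :: 'a set)" by simp
  from Ain show ?thesis
  proof (induction A rule: sigma_sets_induct_disjoint[OF ist pw, consumes 1, case_names basic empty compl union])
    case (basic A)
    then have cA: "closed A" by simp
    show ?case
    proof (intro allI impI)
      fix e :: real assume e: "e > 0"
      show "\<exists>C U. closed C \<and> open U \<and> C \<subseteq> A \<and> A \<subseteq> U \<and> measure M (U - C) < e"
      proof (cases "A = {}")
        case True then show ?thesis using e by (intro exI[of _ "{}"]) auto
      next
        case False
        from thick_small[OF fm sb cA False e] obtain r where r: "r > 0"
          "measure M ({p. infdist p A < r} - A) < e" by auto
        have "open {p. infdist p A < r}"
          by (intro open_Collect_less continuous_intros)
        moreover have "A \<subseteq> {p. infdist p A < r}" using r(1) by auto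
        ultimately show ?thesis using cA r by blast
      qed
    qed
  next
    case empty
    then show ?case by (intro allI impI exI[of _ "{}"]) auto
  next
    case (compl A)
    show ?case
    proof (intro allI impI)
      fix e :: real assume e: "e > 0"
      from compl(2)[rule_format, OF e] obtain C U where CU: "closed C" "open U" "C \<subseteq> A" "A \<subseteq> U" "measure M (U - C) < e"
        by auto
      have "(UNIV - C) - (UNIV - U) = U - C" by auto
      then show "\<exists>C' U'. closed C' \<and> open U' \<and> C' \<subseteq> UNIV - A \<and> UNIV - A \<subseteq> U' \<and> measure M (U' - C') < e"
        using CU closed_Diff[OF closed_UNIV, of U] open_Diff[OF open_UNIV, of C]
        by (intro exI[of _ "UNIV - U"] exI[of _ "UNIV - C"]) auto
    qed
  next
    case (union A)
    show ?case
    proof (intro allI impI)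
      fix e :: real assume e: "e > 0"
      define d where "d i = e / 4 * (1/2)^i" for i :: nat
      have dpos: "d i > 0" for i using e unfolding d_def by simp
      have "\<forall>i. \<exists>CU. closed (fst CU) \<and> open (snd CU) \<and> fst CU \<subseteq> A i \<and> A i \<subseteq> snd CU \<and> measure M (snd CU - fst CU) < d i"
        using union(3) dpos by fastforce
      from choice[OF this] obtain CU where CU: "\<And>i. closed (fst (CU i)) \<and> open (snd (CU i)) \<and> fst (CU i) \<subseteq> A i \<and> A i \<subseteq> snd (CU i) \<and> measure M (snd (CU i) - fst (CU i)) < d i"
        by blast
      define C where "C i = fst (CU i)" for i
      define U where "U i = snd (CU i)" for i
      have CUi: "closed (C i)" "open (U i)" "C i \<subseteq> A i" "A i \<subseteq> U i" "measure M (U i - C i) < d i" for i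
        using CU[of i] unfolding C_def U_def by auto
      have Ameas: "A i \<in> sets M" for i
        using union(2) sb by (auto simp: borel_eq_closed)
      have dsums: "d sums (e / 4 * 2)"
        unfolding d_def by (intro sums_mult) (use geometric_sums[of "1/2::real"] in auto)
      have summ: "summable (\<lambda>i. measure M (U i - C i))"
      proof (rule summable_comparison_test)
        show "\<exists>N. \<forall>n\<ge>N. norm (measure M (U n - C n)) \<le> d n"
          using CUi(5) by (intro exI[of _ 0]) (simp add: less_imp_le)
        show "summable d" using dsums by (simp add: sums_summable)
      qed
      have "measure M (\<Union>i. U i - C i) \<le> (\<Sum>i. measure M (U i - C i))"
        using summ mopen CUi by (intro finite_measure_subadditive_countably) auto
      also have "\<dots> \<le> (\<Sum>i. d i)"
        using summ dsums CUi(5) by (intro suminf_le) (auto simp: sums_summable less_imp_le)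
      also have "\<dots> = e / 2" using dsums sums_unique by fastforce
      finally have m1: "measure M (\<Union>i. U i - C i) \<le> e / 2" .
      define P where "P n = (\<Union>i<n. A i)" for n
      have "(\<lambda>n. measure M (P n)) \<longlonglongrightarrow> measure M (\<Union>n. P n)"
        using Ameas by (intro finite_Lim_measure_incseq) (auto simp: P_def incseq_def, meson lessThan_iff less_le_trans)
      moreover have "(\<Union>n. P n) = (\<Union>i. A i)" unfolding P_def by auto
      ultimately have "(\<lambda>n. measure M (P n)) \<longlonglongrightarrow> measure M (\<Union>i. A i)" by simp
      then obtain N where N: "norm (measure M (P N) - measure M (\<Union>i. A i)) < e / 2"
        using e LIMSEQ_D[of "\<lambda>n. measure M (P n)" "measure M (\<Union>i. A i)" "e/2"] by auto
      have PN: "P N \<in> sets M" unfolding P_def using Ameas by auto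
      have m2: "measure M ((\<Union>i. A i) - P N) < e / 2"
      proof -
        have "measure M ((\<Union>i. A i) - P N) = measure M (\<Union>i. A i) - measure M (P N)"
          using PN Ameas by (intro finite_measure_Diff) (auto simp: P_def)
        then show ?thesis using N by (simp only: real_norm_def)
      qed
      define CC where "CC = (\<Union>i<N. C i)"
      define UU where "UU = (\<Union>i. U i)"
      have sub: "UU - CC \<subseteq> (\<Union>i. U i - C i) \<union> ((\<Union>i. A i) - P N)"
      proof
        fix p assume p: "p \<in> UU - CC"
        then obtain i where i: "p \<in> U i" unfolding UU_def by auto
        show "p \<in> (\<Union>i. U i - C i) \<union> ((\<Union>i. A i) - P N)"
        proof (cases "p \<in> P N")
          case True
          then obtain j where "j < N" "p \<in> A j" unfolding P_def by auto
          then show ?thesis using p CUi(4)[of j] unfolding CC_def by auto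
        next
          case False
          show ?thesis
          proof (cases "p \<in> C i")
            case True then show ?thesis using False CUi(3)[of i] by auto
          next
            case False then show ?thesis using i by auto
          qed
        qed
      qed
      have "measure M (UU - CC) \<le> measure M ((\<Union>i. U i - C i) \<union> ((\<Union>i. A i) - P N))"
        using sub mopen CUi Ameas PN by (intro finite_measure_mono) auto
      also have "\<dots> \<le> measure M (\<Union>i. U i - C i) + measure M ((\<Union>i. A i) - P N)"
        using mopen CUi Ameas PN by (intro measure_Un_le) auto
      also have "\<dots> < e" using m1 m2 by simp
      finally have "measure M (UU - CC) < e" .
      moreover have "closed CC" unfolding CC_def using CUi by auto
      moreover have "open UU" unfolding UU_def using CUi by auto
      moreover have "CC \<subseteq> (\<Union>i. A i)" unfolding CC_def
        using CUi(3) by (meson UN_mono subset_UNIV order_trans)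
      moreover have "(\<Union>i. A i) \<subseteq> UU" unfolding UU_def
        using CUi(4) by (meson UN_mono subset_refl)
      ultimately show "\<exists>C U. closed C \<and> open U \<and> C \<subseteq> (\<Union>i. A i) \<and> (\<Union>i. A i) \<subseteq> U \<and> measure M (U - C) < e"
        by (intro exI[of _ CC] exI[of _ UU]) simp
    qed
  qed
qed


lemma max0_lip: "\<bar>max 0 (a::real) - max 0 b\<bar> \<le> \<bar>a - b\<bar>" by linarith

lemma lip_approx:
  fixes M :: "'a::metric_space measure"
  assumes fm: "finite_measure M" and sb: "sets M = sets borel" and A: "A \<in> sets borel" and e: "e > 0"
  shows "\<exists>g L. continuous_on UNIV g \<and> (\<forall>p. 0 \<le> g p \<and> g p \<le> 1) \<and>
     (\<forall>p q. \<bar>g p - g q\<bar> \<le> L * dist p q) \<and> (\<integral>p. \<bar>indicator A p - g p\<bar> \<partial>M) < e"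
proof -
  interpret finite_measure M by fact
  have sp: "space M = UNIV" using sets_eq_imp_space_eq[OF sb] by simp
  obtain C U where CU: "closed C" "open U" "C \<subseteq> A" "A \<subseteq> U" "measure M (U - C) < e/2"
  proof -
    have "e/2 > 0" using e by simp
    then show ?thesis using closed_regular[OF fm sb A] that by blast
  qed
  have AM: "A \<in> sets M" using A sb by simp
  have CM: "C \<in> sets M" using CU sb by simp
  have "measure M (A - C) \<le> measure M (U - C)"
    using CU AM CM sb by (intro finite_measure_mono) auto
  then have AC: "measure M (A - C) < e/2" using CU by simp
  show ?thesis
  proof (cases "C = {}")
    case True
    have "(\<integral>p. \<bar>indicator A p - (0::real)\<bar> \<partial>M) = measure M A"
      by (simp add: sp)
    then show ?thesis using True AC e
      by (intro exI[of _ "\<lambda>_. 0"] exI[of _ 0]) (auto simp: continuous_on_const)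
  next
    case False
    obtain r where r: "r > 0" "measure M ({p. infdist p C < r} - C) < e/2"
    proof -
      have "e/2 > 0" using e by simp
      from thick_small[OF fm sb CU(1) False this] show ?thesis using that by blast
    qed
    define T where "T = {p. infdist p C < r}"
    have Topen: "open T" unfolding T_def by (intro open_Collect_less continuous_intros)
    have TM: "T - C \<in> sets M" using Topen CU sb by (intro sets.Diff) auto
    define g where "g p = max 0 (1 - infdist p C / r)" for p
    have gcont: "continuous_on UNIV g" unfolding g_def by (intro continuous_intros) (use r in auto)
    then have gm: "g \<in> borel_measurable borel" by (rule borel_measurable_continuous_onI)
    have g01: "0 \<le> g p \<and> g p \<le> 1" for p
      unfolding g_def using infdist_nonneg[of p C] r by (auto simp: field_simps)
    have glip: "\<bar>g p - g q\<bar> \<le> (1/r) * dist p q" for p q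
    proof -
      have "\<bar>g p - g q\<bar> \<le> \<bar>(1 - infdist p C / r) - (1 - infdist q C / r)\<bar>"
        unfolding g_def by (rule max0_lip)
      also have "\<dots> = \<bar>(infdist q C - infdist p C) / r\<bar>"
        by (simp add: diff_divide_distrib)
      also have "\<dots> = \<bar>infdist p C - infdist q C\<bar> / r" using r
        by (simp add: abs_minus_commute)
      also have "\<dots> \<le> dist p q / r" using r infdist_triangle_abs[of p C q]
        by (simp add: divide_right_mono)
      finally show ?thesis by simp
    qed
    have pw: "\<bar>indicator A p - g p\<bar> \<le> indicator (A - C) p + indicator (T - C) p" for p
    proof (cases "p \<in> C")
      case True
      then have "infdist p C = 0" by (simp add: infdist_zero)
      then show ?thesis using True CU(3) by (auto simp: g_def indicator_def)
    next
      case nC: False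
      show ?thesis
      proof (cases "p \<in> A")
        case True then show ?thesis using nC g01[of p] by (auto simp: indicator_def)
      next
        case nA: False
        show ?thesis
        proof (cases "p \<in> T")
          case True then show ?thesis using nC nA g01[of p] by (auto simp: indicator_def)
        next
          case False
          then have "infdist p C \<ge> r" unfolding T_def by auto
          then have "g p = 0" unfolding g_def using r by (auto simp: field_simps)
          then show ?thesis using nA by (auto simp: indicator_def)
        qed
      qed
    qed
    have gmM: "g \<in> borel_measurable M" using gm by (simp add: measurable_cong_sets[OF sb refl])
    have iAm: "(indicator A :: _ \<Rightarrow> real) \<in> borel_measurable M" using AM by simp
    have bnd: "norm \<bar>indicator A p - g p\<bar> \<le> (1::real)" for p
      using g01[of p] by (simp add: indicator_def)
    have int1: "integrable M (\<lambda>p. \<bar>indicator A p - g p\<bar>)"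
      by (rule integrable_const_bound[where B=1]) (use bnd gmM iAm in auto)
    have int2: "integrable M (\<lambda>p. indicator (A - C) p + indicator (T - C) p :: real)"
      using AM CM TM by (intro Bochner_Integration.integrable_add integrable_real_indicator) (auto simp: less_top[symmetric])
    have "(\<integral>p. \<bar>indicator A p - g p\<bar> \<partial>M) \<le> (\<integral>p. indicator (A - C) p + indicator (T - C) p \<partial>M)"
      using int1 int2 pw by (rule integral_mono)
    also have "\<dots> = measure M (A - C) + measure M (T - C)"
      using AM CM TM by (subst Bochner_Integration.integral_add) (auto intro!: integrable_real_indicator simp: sp less_top[symmetric])
    also have "\<dots> < e" using AC r(2) unfolding T_def by simp
    finally have fin: "(\<integral>p. \<bar>indicator A p - g p\<bar> \<partial>M) < e" .
    have a1: "\<forall>p. 0 \<le> g p \<and> g p \<le> 1" using g01 by blast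
    have a2: "\<forall>p q. \<bar>g p - g q\<bar> \<le> (1/r) * dist p q" using glip by blast
    show ?thesis apply (rule exI[of _ g], rule exI[of _ "1/r"]) using gcont a1 a2 fin by (intro conjI)
  qed
qed


context
  fixes \<omega> :: "'l::metric_space \<Rightarrow> 'x::metric_space \<Rightarrow> 'x"
    and \<nu> :: "(nat \<Rightarrow> 'l) measure"
    and \<mu> :: "((nat \<Rightarrow> 'l) \<times> 'x) measure"
  assumes cX: "compact (UNIV :: 'x set)"
    and cont: "continuous_on UNIV (\<lambda>(l, x). \<omega> l x)"
    and pnu: "prob_space \<nu>" and snu: "sets \<nu> = sets borel"
    and Fnu: "emeasure \<nu> (Fset \<omega>) = 1"
    and pmu: "prob_space \<mu>" and smu: "sets \<mu> = sets borel"
    and imu: "invariant_measure \<mu> (skew \<omega>)"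
    and dmu: "distr \<mu> borel fst = \<nu>"
begin

lemma spmu: "space \<mu> = UNIV" using sets_eq_imp_space_eq[OF smu] by simp
lemma spnu: "space \<nu> = UNIV" using sets_eq_imp_space_eq[OF snu] by simp

lemma coord_cont: "continuous_on UNIV (\<lambda>p::(nat\<Rightarrow>'l)\<times>'x. fst p i)"
proof -
  have c: "continuous_on UNIV (\<lambda>\<sigma>::nat\<Rightarrow>'l. \<sigma> i)" by (rule continuous_on_product_coordinates)
  have "continuous_on UNIV ((\<lambda>\<sigma>::nat\<Rightarrow>'l. \<sigma> i) \<circ> (\<lambda>p::(nat\<Rightarrow>'l)\<times>'x. fst p))"
    by (rule continuous_on_compose[OF continuous_on_fst[OF continuous_on_id] continuous_on_subset[OF c]]) simp
  then show ?thesis by (simp add: comp_def)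
qed

lemma skew_cont: "continuous_on UNIV (skew \<omega>)"
proof -
  have c1: "continuous_on UNIV (\<lambda>p::(nat\<Rightarrow>'l)\<times>'x. beta_shift (fst p))"
    unfolding beta_shift_def by (intro continuous_on_coordinatewise_then_product coord_cont)
  have c2: "continuous_on UNIV (\<lambda>p::(nat\<Rightarrow>'l)\<times>'x. (fst p 0, snd p))"
    by (intro continuous_on_Pair coord_cont continuous_on_snd continuous_on_id)
  have c3: "continuous_on UNIV (\<lambda>p::(nat\<Rightarrow>'l)\<times>'x. (\<lambda>(l, x). \<omega> l x) (fst p 0, snd p))"
    by (rule continuous_on_compose2[OF cont c2]) auto
  show ?thesis unfolding skew_def using continuous_on_Pair[OF c1 c3] by simp
qed

lemma iter_cont: "continuous_on UNIV (skew \<omega> ^^ n)"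
proof (induction n)
  case 0 then show ?case by (simp add: continuous_on_id')
next
  case (Suc n)
  show ?case using continuous_on_compose[OF Suc skew_cont[THEN continuous_on_subset]] by simp
qed

lemma fst_iter: "fst ((skew \<omega> ^^ n) p) = (\<lambda>k. fst p (k + n))"
  by (induction n) (auto simp: skew_def beta_shift_def)

lemma snd_iter: "snd ((skew \<omega> ^^ n) (\<sigma>, x)) = comp_iter \<omega> \<sigma> n x"
proof (induction n)
  case 0 then show ?case by simp
next
  case (Suc n)
  have "(skew \<omega> ^^ Suc n) (\<sigma>, x) = skew \<omega> ((skew \<omega> ^^ n) (\<sigma>, x))" by simp
  also have "\<dots> = (beta_shift (fst ((skew \<omega> ^^ n) (\<sigma>, x))), \<omega> (fst ((skew \<omega> ^^ n) (\<sigma>, x)) 0) (snd ((skew \<omega> ^^ n) (\<sigma>, x))))"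
    by (simp add: skew_def)
  finally show ?case using Suc by (simp add: fst_iter)
qed

lemma meas_cont: "continuous_on UNIV f \<Longrightarrow> f \<in> borel_measurable \<mu>"
  using borel_measurable_continuous_onI measurable_cong_sets[OF smu refl] by blast

lemma skew_meas: "skew \<omega> \<in> \<mu> \<rightarrow>\<^sub>M \<mu>" and distr_skew: "distr \<mu> \<mu> (skew \<omega>) = \<mu>"
  using imu by (auto simp: invariant_measure_def)

lemma iter_meas: "(skew \<omega> ^^ n) \<in> \<mu> \<rightarrow>\<^sub>M \<mu>"
  by (induction n) (auto intro: measurable_comp[OF _ skew_meas, simplified comp_def])

lemma distr_iter: "distr \<mu> \<mu> (skew \<omega> ^^ n) = \<mu>"
proof (induction n)
  case 0 then show ?case by (simp add: distr_id[unfolded id_def])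
next
  case (Suc n)
  have "distr \<mu> \<mu> (skew \<omega> ^^ Suc n) = distr (distr \<mu> \<mu> (skew \<omega> ^^ n)) \<mu> (skew \<omega>)"
    by (subst distr_distr[OF skew_meas iter_meas]) simp
  also have "\<dots> = \<mu>" using Suc distr_skew by simp
  finally show ?case .
qed

lemma integral_iter:
  fixes f :: "_ \<Rightarrow> real"
  assumes "f \<in> borel_measurable \<mu>"
  shows "(\<integral>p. f ((skew \<omega> ^^ n) p) \<partial>\<mu>) = (\<integral>p. f p \<partial>\<mu>)"
proof -
  have "(\<integral>p. f p \<partial>\<mu>) = (\<integral>p. f p \<partial>(distr \<mu> \<mu> (skew \<omega> ^^ n)))" by (simp add: distr_iter)
  also have "\<dots> = (\<integral>p. f ((skew \<omega> ^^ n) p) \<partial>\<mu>)"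
    using assms by (intro integral_distr iter_meas) auto
  finally show ?thesis by simp
qed


lemma ic: "continuous_on UNIV h \<Longrightarrow> continuous_on UNIV (\<lambda>p. (skew \<omega> ^^ n) (h p))"
  by (rule continuous_on_compose2[OF iter_cont]) auto

lemma gic: "continuous_on UNIV g \<Longrightarrow> continuous_on UNIV h \<Longrightarrow> continuous_on UNIV (\<lambda>p. g ((skew \<omega> ^^ n) (h p)))"
  by (rule continuous_on_compose2[OF _ ic]) auto

lemma dist_iter: "dist ((skew \<omega> ^^ n) p) ((skew \<omega> ^^ n) (fst p, x)) =
   dist (snd ((skew \<omega> ^^ n) p)) (snd ((skew \<omega> ^^ n) (fst p, x)))"
proof -
  have e: "fst ((skew \<omega> ^^ n) p) = fst ((skew \<omega> ^^ n) (fst p, x))" by (simp add: fst_iter)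
  have "dist ((skew \<omega> ^^ n) p) ((skew \<omega> ^^ n) (fst p, x)) =
     dist (fst ((skew \<omega> ^^ n) p), snd ((skew \<omega> ^^ n) p)) (fst ((skew \<omega> ^^ n) (fst p, x)), snd ((skew \<omega> ^^ n) (fst p, x)))"
    by simp
  also have "\<dots> = dist (snd ((skew \<omega> ^^ n) p)) (snd ((skew \<omega> ^^ n) (fst p, x)))"
    unfolding e dist_Pair_Pair by simp
  finally show ?thesis .
qed

lemma snd_iter': "snd ((skew \<omega> ^^ n) p) = comp_iter \<omega> (fst p) n (snd p)"
  using snd_iter[of n "fst p" "snd p"] by simp

lemma bUNIV: "bounded (UNIV :: 'x set)" using cX by (rule compact_imp_bounded)

lemma F_sets: "Fset \<omega> \<in> sets \<nu>"
  using Fnu emeasure_notin_sets by fastforce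

lemma AE_F: "AE p in \<mu>. fst p \<in> Fset \<omega>"
proof -
  interpret prob_space \<mu> by (rule pmu)
  have fm: "fst \<in> \<mu> \<rightarrow>\<^sub>M borel" using meas_cont[OF continuous_on_fst[OF continuous_on_id]] by simp
  have Fb: "Fset \<omega> \<in> sets borel" using F_sets snu by simp
  have ev: "fst -` Fset \<omega> \<inter> space \<mu> \<in> events" using measurable_sets[OF fm Fb] .
  have "measure \<mu> (fst -` Fset \<omega> \<inter> space \<mu>) = measure (distr \<mu> borel fst) (Fset \<omega>)"
    using measure_distr[OF fm Fb] by simp
  also have "\<dots> = 1" using Fnu dmu by (simp add: measure_def)
  finally have "AE p in \<mu>. p \<in> fst -` Fset \<omega> \<inter> space \<mu>" using AE_in_set_eq_1[OF ev] by simp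
  then show ?thesis by auto
qed

lemma avg_close:
  fixes g :: "(nat\<Rightarrow>'l)\<times>'x \<Rightarrow> real"
  assumes gc: "continuous_on UNIV g" and glip: "\<And>p q. \<bar>g p - g q\<bar> \<le> L * dist p q" and eta: "\<eta> > 0"
  shows "\<exists>N\<ge>1. \<exists>k. continuous_on UNIV k \<and>
     integrable \<mu> (\<lambda>p. \<bar>(\<Sum>n=1..N. g ((skew \<omega> ^^ n) p)) / real N - k (fst p)\<bar>) \<and>
     (\<integral>p. \<bar>(\<Sum>n=1..N. g ((skew \<omega> ^^ n) p)) / real N - k (fst p)\<bar> \<partial>\<mu>) < \<eta>"
proof -
  interpret prob_space \<mu> by (rule pmu)
  define L0 where "L0 = \<bar>L\<bar>"
  have L0: "L0 \<ge> 0" unfolding L0_def by simp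
  have glip0: "\<bar>g p - g q\<bar> \<le> L0 * dist p q" for p q
    using glip[of p q] unfolding L0_def by (smt (verit) mult_right_mono zero_le_dist)
  define x0 :: 'x where "x0 = undefined"
  define D where "D = diameter (UNIV :: 'x set)"
  have D0: "D \<ge> 0" unfolding D_def by (rule diameter_ge_0[OF bUNIV])
  have dD: "dist a b \<le> D" for a b :: 'x unfolding D_def by (rule diameter_bounded_bound[OF bUNIV]) auto
  define A where "A N p = (\<Sum>n=1..N. g ((skew \<omega> ^^ n) p)) / real N" for N p
  define E where "E N p = L0 * ((\<Sum>n=1..N. dist (snd ((skew \<omega> ^^ n) p)) (snd ((skew \<omega> ^^ n) (fst p, x0)))) / real N)" for N p
  have pc: "continuous_on UNIV (\<lambda>p::(nat\<Rightarrow>'l)\<times>'x. (fst p, x0))"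
    by (intro continuous_on_Pair continuous_on_fst continuous_on_id continuous_on_const)
  have Ac: "continuous_on UNIV (\<lambda>p. A N (h p))" if "continuous_on UNIV h" for N and h :: "(nat\<Rightarrow>'l)\<times>'x \<Rightarrow> (nat\<Rightarrow>'l)\<times>'x" 
    unfolding A_def divide_inverse
    by (intro continuous_intros continuous_on_compose2[OF gc ic[OF that]]) auto
  have Ec: "continuous_on UNIV (E N)" for N
    unfolding E_def divide_inverse
    by (intro continuous_intros ic pc continuous_on_id)
  have bound1: "\<bar>A N p - A N (fst p, x0)\<bar> \<le> E N p" for N p
  proof -
    have "\<bar>A N p - A N (fst p, x0)\<bar> = \<bar>\<Sum>n=1..N. g ((skew \<omega> ^^ n) p) - g ((skew \<omega> ^^ n) (fst p, x0))\<bar> / real N"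
      unfolding A_def by (simp add: sum_subtractf diff_divide_distrib[symmetric])
    also have "\<dots> \<le> (\<Sum>n=1..N. \<bar>g ((skew \<omega> ^^ n) p) - g ((skew \<omega> ^^ n) (fst p, x0))\<bar>) / real N"
      by (intro divide_right_mono sum_abs) auto
    also have "\<dots> \<le> (\<Sum>n=1..N. L0 * dist (snd ((skew \<omega> ^^ n) p)) (snd ((skew \<omega> ^^ n) (fst p, x0)))) / real N"
      by (intro divide_right_mono sum_mono) (auto simp: dist_iter[symmetric] glip0)
    also have "\<dots> = E N p" unfolding E_def by (simp add: sum_distrib_left)
    finally show ?thesis .
  qed
  have E0: "0 \<le> E N p" for N p unfolding E_def using L0 by (intro mult_nonneg_nonneg divide_nonneg_nonneg sum_nonneg) auto
  have EB: "E N p \<le> L0 * D" for N p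
  proof (cases "N = 0")
    case True then show ?thesis using L0 D0 by (simp add: E_def)
  next
    case False
    have "(\<Sum>n=1..N. dist (snd ((skew \<omega> ^^ n) p)) (snd ((skew \<omega> ^^ n) (fst p, x0)))) \<le> (\<Sum>n=1..N. D)"
      by (intro sum_mono dD)
    also have "\<dots> = real N * D" by simp
    finally have "(\<Sum>n=1..N. dist (snd ((skew \<omega> ^^ n) p)) (snd ((skew \<omega> ^^ n) (fst p, x0)))) / real N \<le> D"
      using False by (simp add: divide_le_eq mult.commute)
    then show ?thesis unfolding E_def using L0 by (intro mult_left_mono) auto
  qed
  have Elim: "(\<lambda>N. E N p) \<longlonglongrightarrow> 0" if pF: "fst p \<in> Fset \<omega>" for p
  proof -
    define FS where "FS n = (1 / real n) * (\<Sum>i=1..n. diameter (range (comp_iter \<omega> (fst p) i)))" for n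
    have FS: "FS \<longlonglongrightarrow> 0" using pF unfolding Fset_def FS_def by simp
    have le: "E N p \<le> L0 * FS N" for N
    proof -
      have "(\<Sum>n=1..N. dist (snd ((skew \<omega> ^^ n) p)) (snd ((skew \<omega> ^^ n) (fst p, x0))))
          \<le> (\<Sum>i=1..N. diameter (range (comp_iter \<omega> (fst p) i)))"
      proof (intro sum_mono)
        fix i
        show "dist (snd ((skew \<omega> ^^ i) p)) (snd ((skew \<omega> ^^ i) (fst p, x0))) \<le> diameter (range (comp_iter \<omega> (fst p) i))"
          unfolding snd_iter'
          by (rule diameter_bounded_bound[OF bounded_subset[OF bUNIV]]) auto
      qed
      then have "(\<Sum>n=1..N. dist (snd ((skew \<omega> ^^ n) p)) (snd ((skew \<omega> ^^ n) (fst p, x0)))) / real N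
          \<le> (1 / real N) * (\<Sum>i=1..N. diameter (range (comp_iter \<omega> (fst p) i)))"
        by (simp add: divide_right_mono)
      then show ?thesis unfolding E_def FS_def using L0 by (rule mult_left_mono)
    qed
    have "(\<lambda>N. L0 * FS N) \<longlonglongrightarrow> L0 * 0" by (intro tendsto_mult tendsto_const FS)
    then have h: "(\<lambda>N. L0 * FS N) \<longlonglongrightarrow> 0" by simp
    have ev1: "eventually (\<lambda>N. 0 \<le> E N p) sequentially" using E0 by simp
    have ev2: "eventually (\<lambda>N. E N p \<le> L0 * FS N) sequentially" using le by simp
    show ?thesis by (rule tendsto_sandwich[OF ev1 ev2 tendsto_const h])
  qed
  have intlim: "(\<lambda>N. integral\<^sup>L \<mu> (E N)) \<longlonglongrightarrow> integral\<^sup>L \<mu> (\<lambda>p. 0)"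
  proof (rule integral_dominated_convergence[where w="\<lambda>_. L0 * D"])
    show "(\<lambda>p. 0::real) \<in> borel_measurable \<mu>" by simp
    show "E N \<in> borel_measurable \<mu>" for N by (rule meas_cont[OF Ec])
    show "integrable \<mu> (\<lambda>_. L0 * D)" by simp
    show "AE p in \<mu>. (\<lambda>N. E N p) \<longlonglongrightarrow> 0" using AE_F by eventually_elim (rule Elim)
    show "AE p in \<mu>. norm (E N p) \<le> L0 * D" for N using E0 EB by simp
  qed
  then have "(\<lambda>N. integral\<^sup>L \<mu> (E N)) \<longlonglongrightarrow> 0" by simp
  from LIMSEQ_D[OF this eta] obtain N0 where N0: "\<And>N. N \<ge> N0 \<Longrightarrow> norm (integral\<^sup>L \<mu> (E N) - 0) < \<eta>" by blast
  define N where "N = Suc N0"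
  have Nlt: "integral\<^sup>L \<mu> (E N) < \<eta>" using N0[of N] unfolding N_def by simp
  define k where "k \<sigma> = A N (\<sigma>, x0)" for \<sigma>
  have pc2: "continuous_on UNIV (\<lambda>\<sigma>::nat\<Rightarrow>'l. (\<sigma>, x0))"
    by (intro continuous_on_Pair continuous_on_id continuous_on_const)
  have kc: "continuous_on UNIV k" unfolding k_def A_def divide_inverse
    by (intro continuous_intros gic[OF gc pc2])
  have Ac1: "continuous_on UNIV (A N)" unfolding A_def divide_inverse
    by (intro continuous_intros gic[OF gc continuous_on_id])
  have Ac2: "continuous_on UNIV (\<lambda>p. A N (fst p, x0))" unfolding A_def divide_inverse
    by (intro continuous_intros gic[OF gc continuous_on_Pair[OF continuous_on_fst[OF continuous_on_id] continuous_on_const]])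
  have cm: "(\<lambda>p. \<bar>A N p - k (fst p)\<bar>) \<in> borel_measurable \<mu>"
    unfolding k_def by (intro meas_cont continuous_intros Ac1 Ac2)
  have i1: "integrable \<mu> (\<lambda>p. \<bar>A N p - k (fst p)\<bar>)"
  proof (rule integrable_const_bound[where B="L0 * D"])
    show "AE p in \<mu>. norm \<bar>A N p - k (fst p)\<bar> \<le> L0 * D"
    proof (rule AE_I2)
      fix p show "norm \<bar>A N p - k (fst p)\<bar> \<le> L0 * D"
        using bound1[of N p] EB[of N p] unfolding k_def by simp
    qed
  qed (rule cm)
  have i2: "integrable \<mu> (E N)"
    by (rule integrable_const_bound[where B="L0 * D"]) (use meas_cont[OF Ec] E0 EB in auto)
  have "(\<integral>p. \<bar>A N p - k (fst p)\<bar> \<partial>\<mu>) \<le> integral\<^sup>L \<mu> (E N)"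
    using i1 i2 bound1 unfolding k_def by (intro integral_mono) auto
  also have "\<dots> < \<eta>" by (rule Nlt)
  finally have "(\<integral>p. \<bar>A N p - k (fst p)\<bar> \<partial>\<mu>) < \<eta>" .
  then show ?thesis unfolding A_def N_def using kc i1 unfolding A_def N_def
    by (intro exI[of _ "Suc N0"] conjI exI[of _ k]) auto
qed


lemma inv_iter:
  assumes inv: "skew \<omega> -` A \<inter> space \<mu> = A"
  shows "(skew \<omega> ^^ n) p \<in> A \<longleftrightarrow> p \<in> A"
proof (induction n)
  case 0 then show ?case by simp
next
  case (Suc n)
  have "(skew \<omega> ^^ Suc n) p \<in> A \<longleftrightarrow> skew \<omega> ((skew \<omega> ^^ n) p) \<in> A" by simp
  also have "\<dots> \<longleftrightarrow> (skew \<omega> ^^ n) p \<in> A" using inv spmu by blast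
  finally show ?case using Suc by simp
qed

lemma approx_fst:
  assumes A: "A \<in> sets \<mu>" and inv: "skew \<omega> -` A \<inter> space \<mu> = A" and e: "e > 0"
  shows "\<exists>B \<in> sets borel. measure \<mu> ((A - fst -` B) \<union> (fst -` B - A)) < e"
proof -
  interpret prob_space \<mu> by (rule pmu)
  have fm: "finite_measure \<mu>" by unfold_locales
  have Ab: "A \<in> sets borel" using A smu by simp
  have e4: "e/4 > 0" using e by simp
  obtain g L where gc: "continuous_on UNIV g" and g01: "\<And>p. 0 \<le> g p \<and> g p \<le> 1"
    and glip: "\<And>p q. \<bar>g p - g q\<bar> \<le> L * dist p q" and gA: "(\<integral>p. \<bar>indicator A p - g p\<bar> \<partial>\<mu>) < e/4"
    using lip_approx[OF fm smu Ab e4] by blast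
  obtain N k where N: "N \<ge> 1" and kc: "continuous_on UNIV k"
    and iNk: "integrable \<mu> (\<lambda>p. \<bar>(\<Sum>n=1..N. g ((skew \<omega> ^^ n) p)) / real N - k (fst p)\<bar>)"
    and Nk: "(\<integral>p. \<bar>(\<Sum>n=1..N. g ((skew \<omega> ^^ n) p)) / real N - k (fst p)\<bar> \<partial>\<mu>) < e/4"
    using avg_close[OF gc glip e4] by blast
  define AN where "AN p = (\<Sum>n=1..N. g ((skew \<omega> ^^ n) p)) / real N" for p
  define h where "h p = \<bar>indicator A p - g p\<bar>" for p :: "(nat\<Rightarrow>'l)\<times>'x"
  have iA: "(indicator A :: _ \<Rightarrow> real) \<in> borel_measurable \<mu>" using A by simp
  have gm: "g \<in> borel_measurable \<mu>" by (rule meas_cont[OF gc])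
  have hm: "h \<in> borel_measurable \<mu>" unfolding h_def using iA gm by measurable
  have hb: "norm (h p) \<le> 1" for p using g01[of p] unfolding h_def by (simp add: indicator_def)
  have hi: "integrable \<mu> h" by (rule integrable_const_bound[where B=1]) (use hm hb in auto)
  have hin: "integrable \<mu> (\<lambda>p. h ((skew \<omega> ^^ n) p))" for n
    by (rule integrable_const_bound[where B=1])
       (use hb measurable_comp[OF iter_meas hm] in \<open>auto simp: comp_def\<close>)
  have Nr: "real N > 0" using N by simp
  have indA: "indicator A p = (\<Sum>n=1..N. indicator A ((skew \<omega> ^^ n) p)) / real N" for p :: "(nat\<Rightarrow>'l)\<times>'x"
  proof -
    have "(\<Sum>n=1..N. indicator A ((skew \<omega> ^^ n) p) :: real) = (\<Sum>n=1..N. indicator A p)"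
      by (intro sum.cong refl) (simp add: indicator_def inv_iter[OF inv])
    then show ?thesis using Nr by simp
  qed
  have pw1: "\<bar>indicator A p - AN p\<bar> \<le> (\<Sum>n=1..N. h ((skew \<omega> ^^ n) p)) / real N" for p
  proof -
    have "\<bar>indicator A p - AN p\<bar> = \<bar>(\<Sum>n=1..N. indicator A ((skew \<omega> ^^ n) p) - g ((skew \<omega> ^^ n) p))\<bar> / real N"
      unfolding AN_def by (subst indA) (simp add: sum_subtractf diff_divide_distrib[symmetric])
    also have "\<dots> \<le> (\<Sum>n=1..N. h ((skew \<omega> ^^ n) p)) / real N"
      unfolding h_def by (intro divide_right_mono sum_abs) auto
    finally show ?thesis .
  qed
  have ANm: "AN \<in> borel_measurable \<mu>"
    unfolding AN_def divide_inverse by (intro meas_cont continuous_intros gic[OF gc continuous_on_id])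
  have km: "(\<lambda>p. k (fst p)) \<in> borel_measurable \<mu>"
    by (rule meas_cont) (rule continuous_on_compose2[OF kc continuous_on_fst[OF continuous_on_id]], auto)
  have i1m: "(\<lambda>p. \<bar>indicator A p - AN p\<bar>) \<in> borel_measurable \<mu>" using iA ANm by measurable
  have isum: "integrable \<mu> (\<lambda>p. (\<Sum>n=1..N. h ((skew \<omega> ^^ n) p)) / real N)"
    using hin by auto
  have i1: "integrable \<mu> (\<lambda>p. \<bar>indicator A p - AN p\<bar>)"
  proof (rule Bochner_Integration.integrable_bound[OF isum i1m], rule AE_I2)
    fix p
    have "(\<Sum>n=1..N. h ((skew \<omega> ^^ n) p)) / real N \<le> \<bar>(\<Sum>n=1..N. h ((skew \<omega> ^^ n) p)) / real N\<bar>"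
      by (rule abs_ge_self)
    then show "norm \<bar>indicator A p - AN p\<bar> \<le> norm ((\<Sum>n=1..N. h ((skew \<omega> ^^ n) p)) / real N)"
      using pw1[of p] by (simp only: real_norm_def abs_abs)
  qed
  have "(\<integral>p. \<bar>indicator A p - AN p\<bar> \<partial>\<mu>) \<le> (\<integral>p. (\<Sum>n=1..N. h ((skew \<omega> ^^ n) p)) / real N \<partial>\<mu>)"
    by (rule integral_mono[OF i1 isum pw1])
  also have "\<dots> = (\<Sum>n=1..N. (\<integral>p. h ((skew \<omega> ^^ n) p) \<partial>\<mu>)) / real N"
    using hin by (simp add: integral_sum)
  also have "\<dots> = (\<Sum>n=1..N. (\<integral>p. h p \<partial>\<mu>)) / real N"
    by (simp add: integral_iter[OF hm])
  also have "\<dots> = (\<integral>p. h p \<partial>\<mu>)" using Nr by simp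
  finally have I1: "(\<integral>p. \<bar>indicator A p - AN p\<bar> \<partial>\<mu>) < e/4" using gA unfolding h_def by simp
  have iNk': "integrable \<mu> (\<lambda>p. \<bar>AN p - k (fst p)\<bar>)" using iNk unfolding AN_def .
  have I2: "(\<integral>p. \<bar>AN p - k (fst p)\<bar> \<partial>\<mu>) < e/4" using Nk unfolding AN_def .
  have pw2: "\<bar>indicator A p - k (fst p)\<bar> \<le> \<bar>indicator A p - AN p\<bar> + \<bar>AN p - k (fst p)\<bar>" for p
    by linarith
  have i3: "integrable \<mu> (\<lambda>p. \<bar>indicator A p - AN p\<bar> + \<bar>AN p - k (fst p)\<bar>)"
    using i1 iNk' by (rule Bochner_Integration.integrable_add)
  have i4m: "(\<lambda>p. \<bar>indicator A p - k (fst p)\<bar>) \<in> borel_measurable \<mu>" using iA km by measurable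
  have i4: "integrable \<mu> (\<lambda>p. \<bar>indicator A p - k (fst p)\<bar>)"
    by (rule Bochner_Integration.integrable_bound[OF i3 i4m]) (rule AE_I2, use pw2 in \<open>auto\<close>)
  have "(\<integral>p. \<bar>indicator A p - k (fst p)\<bar> \<partial>\<mu>) \<le> (\<integral>p. \<bar>indicator A p - AN p\<bar> + \<bar>AN p - k (fst p)\<bar> \<partial>\<mu>)"
    by (rule integral_mono[OF i4 i3 pw2])
  also have "\<dots> = (\<integral>p. \<bar>indicator A p - AN p\<bar> \<partial>\<mu>) + (\<integral>p. \<bar>AN p - k (fst p)\<bar> \<partial>\<mu>)"
    by (rule Bochner_Integration.integral_add[OF i1 iNk'])
  also have "\<dots> < e/2" using I1 I2 by simp
  finally have I3: "(\<integral>p. \<bar>indicator A p - k (fst p)\<bar> \<partial>\<mu>) < e/2" .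
  define B where "B = {\<sigma>. k \<sigma> > 1/2}"
  have Bo: "open B" unfolding B_def using kc by (intro open_Collect_less continuous_on_const) auto
  then have Bb: "B \<in> sets borel" by simp
  define S where "S = (A - fst -` B) \<union> (fst -` B - A)"
  have fstm: "fst \<in> \<mu> \<rightarrow>\<^sub>M borel" using meas_cont[OF continuous_on_fst[OF continuous_on_id]] by simp
  have fB: "fst -` B \<in> sets \<mu>" using measurable_sets[OF fstm Bb] spmu by simp
  have Sm: "S \<in> sets \<mu>" unfolding S_def using A fB by auto
  have pw3: "indicator S p \<le> 2 * \<bar>indicator A p - k (fst p)\<bar>" for p
  proof (cases "p \<in> S")
    case True
    then consider "p \<in> A" "fst p \<notin> B" | "p \<notin> A" "fst p \<in> B" unfolding S_def by auto
    then show ?thesis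
    proof cases
      case 1 then have "k (fst p) \<le> 1/2" unfolding B_def by auto
      then show ?thesis using True 1 by (simp add: indicator_def)
    next
      case 2 then have "k (fst p) > 1/2" unfolding B_def by auto
      then show ?thesis using True 2 by (simp add: indicator_def)
    qed
  next
    case False then show ?thesis by (simp add: indicator_def)
  qed
  have "measure \<mu> S = (\<integral>p. indicator S p \<partial>\<mu>)" using Sm spmu by simp
  also have "\<dots> \<le> (\<integral>p. 2 * \<bar>indicator A p - k (fst p)\<bar> \<partial>\<mu>)"
    using Sm i4 pw3 by (intro integral_mono) (auto simp: less_top[symmetric])
  also have "\<dots> = 2 * (\<integral>p. \<bar>indicator A p - k (fst p)\<bar> \<partial>\<mu>)" by simp
  also have "\<dots> < e" using I3 by simp
  finally show ?thesis using Bb unfolding S_def by blast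
qed


lemma fstm: "fst \<in> \<mu> \<rightarrow>\<^sub>M borel"
  using meas_cont[OF continuous_on_fst[OF continuous_on_id]] by simp

lemma fst_pre: "B \<in> sets borel \<Longrightarrow> fst -` B \<in> sets \<mu>"
  using measurable_sets[OF fstm, of B] spmu by simp

lemma beta_iter: "(beta_shift ^^ n) \<sigma> = (\<lambda>k. \<sigma> (k + n))"
  by (induction n) (auto simp: beta_shift_def)

lemma beta_iter_cont: "continuous_on UNIV (beta_shift ^^ n :: (nat \<Rightarrow> 'l) \<Rightarrow> _)"
proof -
  have "continuous_on UNIV (\<lambda>\<sigma>::nat \<Rightarrow> 'l. (\<lambda>k. \<sigma> (k + n)))"
    by (intro continuous_on_coordinatewise_then_product continuous_on_product_coordinates)
  then show ?thesis by (simp add: beta_iter[abs_def])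
qed

lemma beta_pre: "B \<in> sets borel \<Longrightarrow> (beta_shift ^^ n) -` B \<in> sets (borel :: (nat \<Rightarrow> 'l) measure)"
  using measurable_sets[OF borel_measurable_continuous_onI[OF beta_iter_cont[of n]], of B] by simp

lemma null_small:
  fixes x :: real assumes "\<And>N::nat. x \<le> 2 * (1/2)^N" shows "x \<le> 0"
proof (rule ccontr)
  assume "\<not> x \<le> 0"
  then have "x/2 > 0" by simp
  from real_arch_pow_inv[OF this, of "1/2"] obtain n where "(1/2::real)^n < x/2" by auto
  with assms[of n] show False by simp
qed

lemma ergodic_part:
  assumes A: "A \<in> sets \<mu>" and inv: "skew \<omega> -` A \<inter> space \<mu> = A"
    and erg: "ergodic \<nu> beta_shift"
  shows "emeasure \<mu> A = 0 \<or> emeasure \<mu> A = 1"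
proof -
  interpret prob_space \<mu> by (rule pmu)
  define SD where "SD X Y = (X - Y) \<union> (Y - X)" for X Y :: "((nat\<Rightarrow>'l)\<times>'x) set"
  have "\<forall>j::nat. \<exists>B. B \<in> sets borel \<and> measure \<mu> ((A - fst -` B) \<union> (fst -` B - A)) < (1/2)^j"
    using approx_fst[OF A inv] by (meson zero_less_divide_1_iff zero_less_numeral zero_less_power)
  from choice[OF this] obtain BB where BB: "\<And>j. BB j \<in> sets borel"
    "\<And>j. measure \<mu> (SD A (fst -` BB j)) < (1/2)^j" unfolding SD_def by blast
  define C where "C j = (fst -` BB j :: ((nat\<Rightarrow>'l)\<times>'x) set)" for j
  have Cm: "C j \<in> sets \<mu>" for j unfolding C_def by (rule fst_pre[OF BB(1)])
  have Am: "A \<in> sets \<mu>" by (rule A)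
  define Binf where "Binf = (\<Union>M. \<Inter>j\<in>{M..}. BB j)"
  have Binfb: "Binf \<in> sets borel" unfolding Binf_def using BB(1) by auto
  define E where "E = (fst -` Binf :: ((nat\<Rightarrow>'l)\<times>'x) set)"
  have Em: "E \<in> sets \<mu>" unfolding E_def by (rule fst_pre[OF Binfb])
  have SDm: "SD X Y \<in> sets \<mu>" if "X \<in> sets \<mu>" "Y \<in> sets \<mu>" for X Y
    unfolding SD_def using that by auto
  have E0: "measure \<mu> (SD A E) \<le> 0"
  proof (rule null_small)
    fix N :: nat
    define D where "D j = SD A (C (j + N))" for j
    have Dm: "D j \<in> sets \<mu>" for j unfolding D_def by (intro SDm Am Cm)
    have Dlt: "measure \<mu> (D j) \<le> (1/2)^N * (1/2)^j" for j
      using BB(2)[of "j + N"] unfolding D_def C_def by (simp add: power_add less_imp_le mult.commute)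
    have gs: "(\<lambda>j. (1/2::real)^N * (1/2)^j) sums ((1/2)^N * 2)"
      by (intro sums_mult) (use geometric_sums[of "1/2::real"] in auto)
    have summ: "summable (\<lambda>j. measure \<mu> (D j))"
    proof (rule summable_comparison_test)
      show "\<exists>N'. \<forall>n\<ge>N'. norm (measure \<mu> (D n)) \<le> (1/2)^N * (1/2)^n"
        using Dlt by (intro exI[of _ 0]) simp
      show "summable (\<lambda>j. (1/2::real)^N * (1/2)^j)" using gs by (simp add: sums_summable)
    qed
    have sub: "SD A E \<subseteq> (\<Union>j. D j)"
    proof
      fix p assume p: "p \<in> SD A E"
      show "p \<in> (\<Union>j. D j)"
      proof (cases "p \<in> A")
        case True
        then have "p \<notin> E" using p unfolding SD_def by auto
        then have "\<not> (\<forall>j\<ge>N. fst p \<in> BB j)" unfolding E_def Binf_def by auto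
        then obtain j where "j \<ge> N" "fst p \<notin> BB j" by auto
        then have "p \<in> D (j - N)" using True unfolding D_def SD_def C_def by auto
        then show ?thesis by auto
      next
        case False
        then have "p \<in> E" using p unfolding SD_def by auto
        then obtain M where M: "\<And>j. j \<ge> M \<Longrightarrow> fst p \<in> BB j" unfolding E_def Binf_def by auto
        have "fst p \<in> BB (M + N)" by (rule M) simp
        then have "p \<in> D M" using False unfolding D_def SD_def C_def by (auto simp: add.commute)
        then show ?thesis by auto
      qed
    qed
    have "measure \<mu> (SD A E) \<le> measure \<mu> (\<Union>j. D j)"
      using sub Dm by (intro finite_measure_mono) auto
    also have "\<dots> \<le> (\<Sum>j. measure \<mu> (D j))"
      using Dm summ by (intro finite_measure_subadditive_countably) auto
    also have "\<dots> \<le> (\<Sum>j. (1/2::real)^N * (1/2)^j)"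
      using summ gs Dlt by (intro suminf_le) (auto simp: sums_summable)
    also have "\<dots> = (1/2)^N * 2" using gs sums_unique by fastforce
    finally show "measure \<mu> (SD A E) \<le> 2 * (1/2)^N" by simp
  qed
  define I where "I = (\<Union>M. \<Inter>n\<in>{M..}. (beta_shift ^^ n) -` Binf)"
  have Ib: "I \<in> sets borel" unfolding I_def using beta_pre[OF Binfb] by auto
  have Iinv: "beta_shift -` I = I"
  proof -
    have *: "(beta_shift ^^ n) (beta_shift \<sigma>) = (beta_shift ^^ Suc n) \<sigma>" for n \<sigma>
      by (simp only: funpow_Suc_right o_apply)
    have "\<sigma> \<in> beta_shift -` I \<longleftrightarrow> \<sigma> \<in> I" for \<sigma>
    proof
      assume "\<sigma> \<in> beta_shift -` I"
      then obtain M where M: "\<And>n. n \<ge> M \<Longrightarrow> (beta_shift ^^ Suc n) \<sigma> \<in> Binf"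
        unfolding I_def by (auto simp: *)
      have "(beta_shift ^^ n) \<sigma> \<in> Binf" if "n \<ge> Suc M" for n
        using M[of "n - 1"] that by (metis Suc_diff_1 Suc_le_D Suc_le_mono le_0_eq zero_less_Suc)
      then show "\<sigma> \<in> I" unfolding I_def by auto
    next
      assume "\<sigma> \<in> I"
      then obtain M where M: "\<And>n. n \<ge> M \<Longrightarrow> (beta_shift ^^ n) \<sigma> \<in> Binf"
        unfolding I_def by auto
      have "(beta_shift ^^ n) (beta_shift \<sigma>) \<in> Binf" if "n \<ge> M" for n
        unfolding * using M[of "Suc n"] that by (simp del: funpow.simps)
      then show "\<sigma> \<in> beta_shift -` I" unfolding I_def by auto
    qed
    then show ?thesis by auto
  qed
  define X where "X = (fst -` I :: ((nat\<Rightarrow>'l)\<times>'x) set)"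
  have Xm: "X \<in> sets \<mu>" unfolding X_def by (rule fst_pre[OF Ib])
  have fstE: "(skew \<omega> ^^ n) p \<in> E \<longleftrightarrow> fst p \<in> (beta_shift ^^ n) -` Binf" for n p
    unfolding E_def by (simp add: fst_iter beta_iter)
  have pre0: "measure \<mu> ((skew \<omega> ^^ n) -` SD A E) = 0" for n
  proof -
    have "measure \<mu> ((skew \<omega> ^^ n) -` SD A E \<inter> space \<mu>) = measure (distr \<mu> \<mu> (skew \<omega> ^^ n)) (SD A E)"
      using measure_distr[OF iter_meas SDm[OF Am Em]] by simp
    also have "\<dots> = measure \<mu> (SD A E)" by (simp add: distr_iter)
    also have "\<dots> = 0" using E0 measure_nonneg[of \<mu> "SD A E"] by linarith
    finally show ?thesis using spmu by simp
  qed
  have prem: "(skew \<omega> ^^ n) -` SD A E \<in> sets \<mu>" for n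
    using measurable_sets[OF iter_meas SDm[OF Am Em]] spmu by simp
  have subX: "SD A X \<subseteq> (\<Union>n. (skew \<omega> ^^ n) -` SD A E)"
  proof
    fix p assume p: "p \<in> SD A X"
    show "p \<in> (\<Union>n. (skew \<omega> ^^ n) -` SD A E)"
    proof (cases "p \<in> A")
      case True
      then have "p \<notin> X" using p unfolding SD_def by auto
      then have "\<exists>n. fst p \<notin> (beta_shift ^^ n) -` Binf" unfolding X_def I_def by auto
      then obtain n where "fst p \<notin> (beta_shift ^^ n) -` Binf" by blast
      then have "(skew \<omega> ^^ n) p \<notin> E" using fstE[of n p] by blast
      moreover have "(skew \<omega> ^^ n) p \<in> A" using True inv_iter[OF inv] by simp
      ultimately show ?thesis unfolding SD_def by auto
    next
      case False
      then have "p \<in> X" using p unfolding SD_def by auto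
      then obtain M where "\<And>n. n \<ge> M \<Longrightarrow> fst p \<in> (beta_shift ^^ n) -` Binf"
        unfolding X_def I_def by auto
      then have "fst p \<in> (beta_shift ^^ M) -` Binf" by simp
      then have "(skew \<omega> ^^ M) p \<in> E" using fstE[of M p] by blast
      moreover have "(skew \<omega> ^^ M) p \<notin> A" using False inv_iter[OF inv] by simp
      ultimately show ?thesis unfolding SD_def by auto
    qed
  qed
  have AX0: "measure \<mu> (SD A X) = 0"
  proof -
    have "measure \<mu> (SD A X) \<le> measure \<mu> (\<Union>n. (skew \<omega> ^^ n) -` SD A E)"
      using subX prem by (intro finite_measure_mono) auto
    also have "\<dots> \<le> (\<Sum>n. measure \<mu> ((skew \<omega> ^^ n) -` SD A E))"
      using prem pre0 by (intro finite_measure_subadditive_countably) auto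
    also have "\<dots> = 0" using pre0 by simp
    finally show ?thesis using measure_nonneg[of \<mu> "SD A X"] by linarith
  qed
  have mAX: "measure \<mu> A = measure \<mu> X"
  proof -
    have "measure \<mu> A \<le> measure \<mu> (X \<union> SD A X)"
      using Am Xm SDm[OF Am Xm] by (intro finite_measure_mono) (auto simp: SD_def)
    also have "\<dots> \<le> measure \<mu> X + measure \<mu> (SD A X)" using Xm SDm[OF Am Xm] by (rule measure_Un_le)
    finally have 1: "measure \<mu> A \<le> measure \<mu> X" using AX0 by simp
    have "measure \<mu> X \<le> measure \<mu> (A \<union> SD A X)"
      using Am Xm SDm[OF Am Xm] by (intro finite_measure_mono) (auto simp: SD_def)
    also have "\<dots> \<le> measure \<mu> A + measure \<mu> (SD A X)" using Am SDm[OF Am Xm] by (rule measure_Un_le)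
    finally have 2: "measure \<mu> X \<le> measure \<mu> A" using AX0 by simp
    from 1 2 show ?thesis by simp
  qed
  have mXI: "measure \<mu> X = measure \<nu> I"
    using measure_distr[OF fstm Ib] dmu spmu unfolding X_def by simp
  have Inu: "I \<in> sets \<nu>" using Ib snu by simp
  have "emeasure \<nu> I = 0 \<or> emeasure \<nu> I = 1"
    using erg Inu Iinv spnu unfolding ergodic_def by auto
  then have "measure \<nu> I = 0 \<or> measure \<nu> I = 1" by (auto simp: measure_def)
  then have "measure \<mu> A = 0 \<or> measure \<mu> A = 1" using mAX mXI by simp
  then show ?thesis by (auto simp: emeasure_eq_measure)
qed

end

theorem proposition2:
  fixes \<omega> :: "'l::metric_space \<Rightarrow> 'x::metric_space \<Rightarrow> 'x"
    and \<nu> :: "(nat \<Rightarrow> 'l) measure"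
    and \<mu> :: "((nat \<Rightarrow> 'l) \<times> 'x) measure"
  assumes "compact (UNIV :: 'x set)"
    and "compact (UNIV :: 'l set)"
    and "continuous_on UNIV (\<lambda>(l, x). \<omega> l x)"
    and "prob_space \<nu>" and "sets \<nu> = sets borel"
    and "invariant_measure \<nu> beta_shift"
    and "emeasure \<nu> (Fset \<omega>) = 1"
    and "prob_space \<mu>" and "sets \<mu> = sets borel"
    and "invariant_measure \<mu> (skew \<omega>)"
    and "distr \<mu> borel fst = \<nu>"
    and "ergodic \<nu> beta_shift"
  shows "ergodic \<mu> (skew \<omega>)"
  unfolding ergodic_def
proof (intro conjI ballI impI)
  show "invariant_measure \<mu> (skew \<omega>)" by (rule assms(10))
next
  fix A assume A: "A \<in> sets \<mu>" and inv: "skew \<omega> -` A \<inter> space \<mu> = A"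
  show "emeasure \<mu> A = 0 \<or> emeasure \<mu> A = 1"
    by (rule ergodic_part[OF assms(1) assms(3) assms(4) assms(5) assms(7) assms(8) assms(9) assms(10) assms(11) A inv assms(12)])
qed

end
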